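(* Let $f:\mathbb{R}^n\to\mathbb{R}^m$ be smooth and let $M$ be its graph in $\mathbb{R}^{n+m}$ with induced metric. Then for each $\alpha$, the Ricci operator $Rc$ and the shape operator $A^\alpha$ satisfy $$A^\alpha Rc-Rc\,A^\alpha=U^{\mu\nu}\big((\mathrm{Tr}A^\mu)R^\perp_{\nu\alpha}+R^\perp_{\alpha\mu}A^\nu+A^\mu R^\perp_{\alpha\nu}\big),$$ with summation over $\mu,\nu$.
   Context: $M=\{(x,f(x))\}$ has tangent frame $\partial_i=(e_i,f^\alpha_ie_\alpha)$, metric $g_{ij}=\delta_{ij}+f^\alpha_if^\alpha_j$, and normal vectors $\eta^\alpha=(-Df^\alpha,e_\alpha)$, $1\le\alpha\le m$. $U_{\alpha\beta}=\langle\eta^\alpha,\eta^\beta\rangle=\delta_{\alpha\beta}+\langle Df^\alpha,Df^\beta\rangle$ with inverse $U^{\alpha\beta}$. The shape operator with respect to $\eta^\alpha$ is $A^\alpha X=-(\bar\nabla_X\eta^\alpha)^\top$, i.e. $A^\alpha\partial_i=f^\alpha_{ik}g^{kj}\partial_j$. The normal curvature operators are $R^\perp_{\alpha\beta}=A^\beta A^\alpha-A^\alpha A^\beta$. The Ricci operator $Rc:TM\to TM$ is defined by $\langle Rc(X),Y\rangle=\mathrm{Ric}(X,Y)$. *)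

theory Defs
  imports "HOL-Analysis.Analysis"
begin

definition pd :: "'n::finite \<Rightarrow> (real^'n \<Rightarrow> real) \<Rightarrow> real^'n \<Rightarrow> real" where
  "pd i h x = deriv (\<lambda>t. h (x + t *\<^sub>R axis i 1)) 0"

fun pds :: "'n::finite list \<Rightarrow> (real^'n \<Rightarrow> real) \<Rightarrow> real^'n \<Rightarrow> real" where
  "pds [] h = h"
| "pds (i # is) h = pd i (pds is h)"

definition smooth_fun :: "(real^'n::finite \<Rightarrow> real) \<Rightarrow> bool" where
  "smooth_fun h \<longleftrightarrow> (\<forall>is x. pds is h differentiable (at x))"

definition smooth_map :: "(real^'n::finite \<Rightarrow> real^'m::finite) \<Rightarrow> bool" where
  "smooth_map f \<longleftrightarrow> (\<forall>\<alpha>. smooth_fun (\<lambda>x. f x $ \<alpha>))"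

definition fd1 :: "(real^'n::finite \<Rightarrow> real^'m::finite) \<Rightarrow> 'm \<Rightarrow> 'n \<Rightarrow> real^'n \<Rightarrow> real" where
  "fd1 f \<alpha> i = pd i (\<lambda>x. f x $ \<alpha>)"

definition fd2 :: "(real^'n::finite \<Rightarrow> real^'m::finite) \<Rightarrow> 'm \<Rightarrow> 'n \<Rightarrow> 'n \<Rightarrow> real^'n \<Rightarrow> real" where
  "fd2 f \<alpha> i j = pd i (pd j (\<lambda>x. f x $ \<alpha>))"

definition gmet :: "(real^'n::finite \<Rightarrow> real^'m::finite) \<Rightarrow> real^'n \<Rightarrow> real^'n^'n" where
  "gmet f x = (\<chi> i j. (if i = j then 1 else 0) + (\<Sum>\<alpha>\<in>UNIV. fd1 f \<alpha> i x * fd1 f \<alpha> j x))"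

definition ginv :: "(real^'n::finite \<Rightarrow> real^'m::finite) \<Rightarrow> real^'n \<Rightarrow> real^'n^'n" where
  "ginv f x = matrix_inv (gmet f x)"

text \<open>U_{alpha beta} = <eta^alpha, eta^beta> = delta + <Df^alpha, Df^beta>, and its inverse.\<close>
definition Umat :: "(real^'n::finite \<Rightarrow> real^'m::finite) \<Rightarrow> real^'n \<Rightarrow> real^'m^'m" where
  "Umat f x = (\<chi> \<alpha> \<beta>. (if \<alpha> = \<beta> then 1 else 0) + (\<Sum>k\<in>UNIV. fd1 f \<alpha> k x * fd1 f \<beta> k x))"

definition Uinv :: "(real^'n::finite \<Rightarrow> real^'m::finite) \<Rightarrow> real^'n \<Rightarrow> real^'m^'m" where
  "Uinv f x = matrix_inv (Umat f x)"

text \<open>Convention: an operator T on the tangent space is represented by its matrix M in the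
  frame d_1..d_n, T(d_i) = sum_j M$j$i d_j; composition of operators = matrix product.\<close>

definition Ashape :: "(real^'n::finite \<Rightarrow> real^'m::finite) \<Rightarrow> 'm \<Rightarrow> real^'n \<Rightarrow> real^'n^'n" where
  "Ashape f \<alpha> x = (\<chi> j i. \<Sum>k\<in>UNIV. fd2 f \<alpha> i k x * ginv f x $ k $ j)"

definition Rperp :: "(real^'n::finite \<Rightarrow> real^'m::finite) \<Rightarrow> 'm \<Rightarrow> 'm \<Rightarrow> real^'n \<Rightarrow> real^'n^'n" where
  "Rperp f \<alpha> \<beta> x = Ashape f \<beta> x ** Ashape f \<alpha> x - Ashape f \<alpha> x ** Ashape f \<beta> x"

definition christ :: "(real^'n::finite \<Rightarrow> real^'m::finite) \<Rightarrow> 'n \<Rightarrow> 'n \<Rightarrow> 'n \<Rightarrow> real^'n \<Rightarrow> real" where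
  "christ f k i j x = (\<Sum>l\<in>UNIV. ginv f x $ k $ l / 2 *
      (pd i (\<lambda>y. gmet f y $ j $ l) x + pd j (\<lambda>y. gmet f y $ i $ l) x - pd l (\<lambda>y. gmet f y $ i $ j) x))"

text \<open>R(d_i,d_j)d_k = R^l_ijk d_l with R(X,Y)Z = nabla_X nabla_Y Z - nabla_Y nabla_X Z - nabla_[X,Y] Z.\<close>
definition riem :: "(real^'n::finite \<Rightarrow> real^'m::finite) \<Rightarrow> 'n \<Rightarrow> 'n \<Rightarrow> 'n \<Rightarrow> 'n \<Rightarrow> real^'n \<Rightarrow> real" where
  "riem f l i j k x = pd i (christ f l j k) x - pd j (christ f l i k) x
      + (\<Sum>p\<in>UNIV. christ f p j k x * christ f l i p x - christ f p i k x * christ f l j p x)"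

definition ricci :: "(real^'n::finite \<Rightarrow> real^'m::finite) \<Rightarrow> real^'n \<Rightarrow> real^'n^'n" where
  "ricci f x = (\<chi> j k. \<Sum>i\<in>UNIV. riem f i i j k x)"

text \<open>Ricci operator: <Rc X, Y> = Ric(X,Y); matrix w.r.t. the convention above is g^{-1} Ric.\<close>
definition Rc :: "(real^'n::finite \<Rightarrow> real^'m::finite) \<Rightarrow> real^'n \<Rightarrow> real^'n^'n" where
  "Rc f x = ginv f x ** ricci f x"

end

theory Submission
  imports Defs "HOL-Analysis.Analysis"
begin

lemma line_deriv:
  fixes h :: "real^'n::finite \<Rightarrow> real"
  assumes "(h has_derivative D) (at (q + s0 *\<^sub>R e))"
  shows "((\<lambda>s. h (q + s *\<^sub>R e)) has_real_derivative D e) (at s0)"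
proof -
  have g: "((\<lambda>s. q + s *\<^sub>R e) has_derivative (\<lambda>s. s *\<^sub>R e)) (at s0)"
    by (auto intro!: derivative_eq_intros)
  have lin: "linear D" using assms has_derivative_linear by blast
  have "((\<lambda>s. h (q + s *\<^sub>R e)) has_derivative (\<lambda>s. D (s *\<^sub>R e))) (at s0)"
    using has_derivative_compose[OF g assms] by simp
  moreover have "(\<lambda>s. D (s *\<^sub>R e)) = (\<lambda>s. D e * s)"
    using lin by (auto simp: linear_scale)
  ultimately show ?thesis by (simp add: has_field_derivative_def)
qed

lemma pd_eq:
  fixes h :: "real^'n::finite \<Rightarrow> real"
  assumes "(h has_derivative D) (at x)"
  shows "pd i h x = D (axis i 1)"
proof -
  have "((\<lambda>s. h (x + s *\<^sub>R axis i 1)) has_real_derivative D (axis i 1)) (at 0)"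
    by (rule line_deriv) (use assms in simp)
  then show ?thesis unfolding pd_def by (rule DERIV_imp_deriv)
qed

lemma pd_frechet:
  fixes h :: "real^'n::finite \<Rightarrow> real"
  assumes "h differentiable (at x)"
  shows "pd i h x = frechet_derivative h (at x) (axis i 1)"
  using assms by (intro pd_eq) (simp add: frechet_derivative_works)

lemma line_deriv_pd:
  fixes h :: "real^'n::finite \<Rightarrow> real"
  assumes "h differentiable (at (q + s0 *\<^sub>R axis i 1))"
  shows "((\<lambda>s. h (q + s *\<^sub>R axis i 1)) has_real_derivative pd i h (q + s0 *\<^sub>R axis i 1)) (at s0)"
  using assms by (simp add: pd_frechet line_deriv frechet_derivative_works)

lemma pd_add:
  fixes u v :: "real^'n::finite \<Rightarrow> real"
  assumes "u differentiable (at x)" "v differentiable (at x)"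
  shows "pd i (\<lambda>y. u y + v y) x = pd i u x + pd i v x"
proof -
  obtain Du Dv where "(u has_derivative Du) (at x)" "(v has_derivative Dv) (at x)"
    using assms by (auto simp: differentiable_def)
  then show ?thesis
    by (metis (no_types) has_derivative_add pd_eq)
qed

lemma pd_diff:
  fixes u v :: "real^'n::finite \<Rightarrow> real"
  assumes "u differentiable (at x)" "v differentiable (at x)"
  shows "pd i (\<lambda>y. u y - v y) x = pd i u x - pd i v x"
proof -
  obtain Du Dv where "(u has_derivative Du) (at x)" "(v has_derivative Dv) (at x)"
    using assms by (auto simp: differentiable_def)
  then show ?thesis
    by (metis (no_types) has_derivative_diff pd_eq)
qed

lemma pd_mult:
  fixes u v :: "real^'n::finite \<Rightarrow> real"
  assumes "u differentiable (at x)" "v differentiable (at x)"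
  shows "pd i (\<lambda>y. u y * v y) x = pd i u x * v x + u x * pd i v x"
proof -
  obtain Du Dv where a: "(u has_derivative Du) (at x)" and b: "(v has_derivative Dv) (at x)"
    using assms by (auto simp: differentiable_def)
  have "((\<lambda>y. u y * v y) has_derivative (\<lambda>h. u x * Dv h + Du h * v x)) (at x)"
    using has_derivative_mult[OF a b] .
  then show ?thesis using pd_eq[OF a] pd_eq[OF b] pd_eq by (metis add.commute mult.commute)
qed

lemma pd_const: "pd i (\<lambda>y. c) x = 0"
  by (rule pd_eq[where D="\<lambda>_. 0", simplified]) simp

lemma pd_sum:
  fixes u :: "'a \<Rightarrow> real^'n::finite \<Rightarrow> real"
  assumes "finite A" "\<And>a. a \<in> A \<Longrightarrow> u a differentiable (at x)"
  shows "pd i (\<lambda>y. \<Sum>a\<in>A. u a y) x = (\<Sum>a\<in>A. pd i (u a) x)"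
  using assms
proof (induction A rule: finite_induct)
  case empty then show ?case by (simp add: pd_const)
next
  case (insert a A)
  have d: "(\<lambda>y. \<Sum>a\<in>A. u a y) differentiable (at x)"
    using insert by (intro differentiable_sum) auto
  have "pd i (\<lambda>y. \<Sum>a\<in>insert a A. u a y) x = pd i (\<lambda>y. u a y + (\<Sum>a\<in>A. u a y)) x"
    using insert by simp
  also have "\<dots> = pd i (u a) x + pd i (\<lambda>y. \<Sum>a\<in>A. u a y) x"
    using pd_add[OF _ d, of "u a"] insert by simp
  finally show ?case using insert by simp
qed

lemma schwarz_mvt:
  fixes h :: "real^'n::finite \<Rightarrow> real"
  assumes dh: "\<And>y. h differentiable (at y)" and dhi: "\<And>y. pd i h differentiable (at y)"
    and t: "t > 0"
  shows "\<exists>p. dist p x \<le> 2 * t \<and>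
     h (x + t *\<^sub>R axis i 1 + t *\<^sub>R axis j 1) - h (x + t *\<^sub>R axis i 1) - h (x + t *\<^sub>R axis j 1) + h x
       = t * t * pd j (pd i h) p"
proof -
  let ?e1 = "axis i (1::real) :: real^'n" and ?e2 = "axis j (1::real) :: real^'n"
  define \<phi> where "\<phi> s = h ((x + t *\<^sub>R ?e2) + s *\<^sub>R ?e1) - h (x + s *\<^sub>R ?e1)" for s
  have "\<And>s. ((\<lambda>s. h ((x + t *\<^sub>R ?e2) + s *\<^sub>R ?e1)) has_real_derivative pd i h ((x + t *\<^sub>R ?e2) + s *\<^sub>R ?e1)) (at s)"
    by (rule line_deriv_pd[OF dh])
  moreover have "\<And>s. ((\<lambda>s. h (x + s *\<^sub>R ?e1)) has_real_derivative pd i h (x + s *\<^sub>R ?e1)) (at s)"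
    by (rule line_deriv_pd[OF dh])
  ultimately have d\<phi>: "\<And>s. (\<phi> has_real_derivative (pd i h ((x + t *\<^sub>R ?e2) + s *\<^sub>R ?e1) - pd i h (x + s *\<^sub>R ?e1))) (at s)"
    unfolding \<phi>_def by (intro DERIV_diff) auto
  obtain \<sigma> where \<sigma>: "0 < \<sigma>" "\<sigma> < t" and
    e1: "\<phi> t - \<phi> 0 = (t - 0) * (pd i h ((x + t *\<^sub>R ?e2) + \<sigma> *\<^sub>R ?e1) - pd i h (x + \<sigma> *\<^sub>R ?e1))"
    using MVT2[OF t d\<phi>] by blast
  define \<psi> where "\<psi> s = pd i h ((x + \<sigma> *\<^sub>R ?e1) + s *\<^sub>R ?e2)" for s
  have d\<psi>: "\<And>s. (\<psi> has_real_derivative pd j (pd i h) ((x + \<sigma> *\<^sub>R ?e1) + s *\<^sub>R ?e2)) (at s)"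
    unfolding \<psi>_def by (rule line_deriv_pd[OF dhi])
  obtain \<tau> where \<tau>: "0 < \<tau>" "\<tau> < t" and
    e2: "\<psi> t - \<psi> 0 = (t - 0) * pd j (pd i h) ((x + \<sigma> *\<^sub>R ?e1) + \<tau> *\<^sub>R ?e2)"
    using MVT2[OF t d\<psi>] by blast
  have "\<psi> t = pd i h ((x + t *\<^sub>R ?e2) + \<sigma> *\<^sub>R ?e1)" "\<psi> 0 = pd i h (x + \<sigma> *\<^sub>R ?e1)"
    unfolding \<psi>_def by (simp_all add: add_ac)
  then have main: "\<phi> t - \<phi> 0 = t * t * pd j (pd i h) ((x + \<sigma> *\<^sub>R ?e1) + \<tau> *\<^sub>R ?e2)"
    using e1 e2 by simp
  have "\<phi> t - \<phi> 0 = h (x + t *\<^sub>R ?e1 + t *\<^sub>R ?e2) - h (x + t *\<^sub>R ?e1) - h (x + t *\<^sub>R ?e2) + h x"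
    unfolding \<phi>_def by (simp add: add_ac)
  moreover have "dist ((x + \<sigma> *\<^sub>R ?e1) + \<tau> *\<^sub>R ?e2) x \<le> 2 * t"
  proof -
    have "dist ((x + \<sigma> *\<^sub>R ?e1) + \<tau> *\<^sub>R ?e2) x = norm (\<sigma> *\<^sub>R ?e1 + \<tau> *\<^sub>R ?e2)"
      by (simp add: dist_norm)
    also have "\<dots> \<le> norm (\<sigma> *\<^sub>R ?e1) + norm (\<tau> *\<^sub>R ?e2)" by (rule norm_triangle_ineq)
    also have "\<dots> = \<sigma> + \<tau>" using \<sigma> \<tau> by simp
    finally show ?thesis using \<sigma> \<tau> by simp
  qed
  ultimately show ?thesis using main by metis
qed

lemma schwarz:
  fixes h :: "real^'n::finite \<Rightarrow> real"
  assumes dh: "\<And>y. h differentiable (at y)" and dhi: "\<And>y. pd i h differentiable (at y)"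
    and dhj: "\<And>y. pd j h differentiable (at y)"
    and c1: "continuous (at x) (pd j (pd i h))" and c2: "continuous (at x) (pd i (pd j h))"
  shows "pd j (pd i h) x = pd i (pd j h) x"
proof (rule ccontr)
  let ?a = "pd j (pd i h) x" and ?b = "pd i (pd j h) x"
  assume ne: "?a \<noteq> ?b"
  define \<epsilon> where "\<epsilon> = \<bar>?a - ?b\<bar> / 2"
  have \<epsilon>: "\<epsilon> > 0" using ne by (simp add: \<epsilon>_def)
  obtain d1 where d1: "d1 > 0" "\<And>y. dist y x < d1 \<Longrightarrow> dist (pd j (pd i h) y) ?a < \<epsilon>"
    using c1 \<epsilon> unfolding continuous_at_eps_delta by blast
  obtain d2 where d2: "d2 > 0" "\<And>y. dist y x < d2 \<Longrightarrow> dist (pd i (pd j h) y) ?b < \<epsilon>"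
    using c2 \<epsilon> unfolding continuous_at_eps_delta by blast
  define t where "t = min d1 d2 / 4"
  have t: "t > 0" using d1 d2 by (simp add: t_def)
  obtain p where p: "dist p x \<le> 2 * t"
    "h (x + t *\<^sub>R axis i 1 + t *\<^sub>R axis j 1) - h (x + t *\<^sub>R axis i 1) - h (x + t *\<^sub>R axis j 1) + h x
       = t * t * pd j (pd i h) p"
    using schwarz_mvt[OF dh dhi t] by blast
  obtain q where q: "dist q x \<le> 2 * t"
    "h (x + t *\<^sub>R axis j 1 + t *\<^sub>R axis i 1) - h (x + t *\<^sub>R axis j 1) - h (x + t *\<^sub>R axis i 1) + h x
       = t * t * pd i (pd j h) q"
    using schwarz_mvt[OF dh dhj t] by blast
  have "t * t * pd j (pd i h) p = t * t * pd i (pd j h) q"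
  proof -
    have "x + t *\<^sub>R axis j 1 + t *\<^sub>R axis i 1 = x + t *\<^sub>R axis i 1 + t *\<^sub>R axis j 1"
      by (simp add: add_ac)
    then have "h (x + t *\<^sub>R axis j 1 + t *\<^sub>R axis i 1) = h (x + t *\<^sub>R axis i 1 + t *\<^sub>R axis j 1)"
      by (rule arg_cong)
    then show ?thesis using p(2) q(2) by linarith
  qed
  then have eq: "pd j (pd i h) p = pd i (pd j h) q" using t by simp
  have "dist p x < d1" "dist q x < d2" using p(1) q(1) t d1 d2 by (auto simp: t_def)
  then have "dist (pd j (pd i h) p) ?a < \<epsilon>" "dist (pd i (pd j h) q) ?b < \<epsilon>"
    using d1 d2 by auto
  then have "\<bar>?a - ?b\<bar> < 2 * \<epsilon>" using eq by (simp add: dist_real_def)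
  then show False by (simp add: \<epsilon>_def)
qed

lemma minv_props:
  fixes A :: "real^'n::finite^'n"
  assumes "invertible A"
  shows "A ** matrix_inv A = mat 1" "matrix_inv A ** A = mat 1"
proof -
  obtain A' where "A ** A' = mat 1 \<and> A' ** A = mat 1" using assms unfolding invertible_def by blast
  then have "A ** matrix_inv A = mat 1 \<and> matrix_inv A ** A = mat 1"
    unfolding matrix_inv_def by (rule someI)
  then show "A ** matrix_inv A = mat 1" "matrix_inv A ** A = mat 1" by auto
qed

lemma minv_unique:
  fixes A B :: "real^'n::finite^'n"
  assumes "A ** B = mat 1"
  shows "matrix_inv A = B"
proof -
  have inv: "invertible A" using assms invertible_right_inverse by blast
  have "matrix_inv A = matrix_inv A ** (A ** B)" using assms by simp
  also have "\<dots> = (matrix_inv A ** A) ** B" by (simp add: matrix_mul_assoc)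
  also have "\<dots> = B" using minv_props(2)[OF inv] by simp
  finally show ?thesis .
qed

lemma minv_sym:
  fixes A :: "real^'n::finite^'n"
  assumes "invertible A" "transpose A = A"
  shows "transpose (matrix_inv A) = matrix_inv A"
proof -
  have "A ** transpose (matrix_inv A) = mat 1"
    using arg_cong[OF minv_props(2)[OF assms(1)], of transpose] assms(2)
    by (simp add: matrix_transpose_mul)
  then show ?thesis using minv_unique by metis
qed

lemma inv_I_plus:
  fixes J :: "real^'n::finite^'m::finite"
  shows "invertible (mat 1 + transpose J ** J)"
proof -
  have "\<forall>x. (mat 1 + transpose J ** J) *v x = 0 \<longrightarrow> x = 0"
  proof (intro allI impI)
    fix x :: "real^'n"
    assume "(mat 1 + transpose J ** J) *v x = 0"
    then have "x + transpose J *v (J *v x) = 0"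
      by (simp add: matrix_vector_mult_add_rdistrib matrix_vector_mul_assoc)
    then have "inner x (x + transpose J *v (J *v x)) = 0" by simp
    moreover have "inner x (transpose J *v (J *v x)) = inner (J *v x) (J *v x)"
      by (subst inner_commute) (simp add: dot_lmul_matrix)
    ultimately have "inner x x + inner (J *v x) (J *v x) = 0"
      by (simp add: inner_add_right)
    then have "inner x x = 0"
      by (metis add_nonneg_eq_0_iff inner_ge_zero)
    then show "x = 0" by simp
  qed
  then show ?thesis
    using invertible_left_inverse matrix_left_invertible_ker by blast
qed

lemma minv_cramer:
  fixes A :: "real^'n::finite^'n"
  assumes "invertible A"
  shows "matrix_inv A $ k $ j = det (\<chi> i l. if l = k then (if i = j then 1 else 0) else A$i$l) / det A"
proof -
  have d0: "det A \<noteq> 0" using assms invertible_det_nz by blast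
  have "A *v (matrix_inv A *v axis j 1) = axis j 1"
    using minv_props(1)[OF assms] by (simp add: matrix_vector_mul_assoc)
  then have "matrix_inv A *v axis j 1 = (\<chi> k. det(\<chi> i l. if l=k then (axis j 1 :: real^'n)$i else A$i$l) / det A)"
    using cramer[OF d0] by blast
  then have "(matrix_inv A *v axis j 1) $ k = det(\<chi> i l. if l=k then (axis j 1 :: real^'n)$i else A$i$l) / det A"
    by simp
  moreover have "(matrix_inv A *v axis j 1) $ k = matrix_inv A $ k $ j"
    by (simp add: matrix_vector_mult_def axis_def if_distrib if_distribR cong: if_cong)
  moreover have ax: "\<And>i. (axis j 1 :: real^'n)$i = (if i=j then 1 else 0)" by (simp add: axis_def)
  ultimately show ?thesis by (simp only: ax)
qed

lemma differentiable_prod':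
  fixes u :: "'i \<Rightarrow> real^'n::finite \<Rightarrow> real"
  assumes "\<And>i. i \<in> I \<Longrightarrow> u i differentiable (at x)"
  shows "(\<lambda>y. \<Prod>i\<in>I. u i y) differentiable (at x)"
proof -
  from assms obtain D where "\<And>i. i \<in> I \<Longrightarrow> (u i has_derivative D i) (at x)"
    unfolding differentiable_def by metis
  then show ?thesis unfolding differentiable_def
    by (blast intro: has_derivative_prod)
qed

lemma det_differentiable:
  fixes M :: "real^'k::finite \<Rightarrow> real^'n::finite^'n"
  assumes "\<And>i l. (\<lambda>y. M y $ i $ l) differentiable (at x)"
  shows "(\<lambda>y. det (M y)) differentiable (at x)"
  unfolding det_def
  by (intro differentiable_sum differentiable_mult differentiable_const differentiable_prod' ballI)
     (auto simp: finite_permutations assms)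

lemma minv_differentiable:
  fixes M :: "real^'k::finite \<Rightarrow> real^'n::finite^'n"
  assumes "\<And>i l. (\<lambda>y. M y $ i $ l) differentiable (at x)" "\<And>y. invertible (M y)"
  shows "(\<lambda>y. matrix_inv (M y) $ k $ j) differentiable (at x)"
proof -
  have h: "\<And>i l. (\<lambda>y. (if l = k then (if i = j then 1 else 0) else M y$i$l)) differentiable (at x)"
    by (case_tac "l = k") (auto simp: assms(1))
  have "(\<lambda>y. det (\<chi> i l. if l = k then (if i = j then 1 else 0) else M y$i$l) / det (M y)) differentiable (at x)"
    using assms(2) invertible_det_nz
    by (intro differentiable_divide det_differentiable) (auto simp: assms(1) h)
  then show ?thesis using minv_cramer[OF assms(2)] by simp
qed

lemma mm_add_r: "((A::real^'n::finite^'m::finite) + B) ** (C::real^'p::finite^'n) = A ** C + B ** C"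
  by (simp add: matrix_matrix_mult_def vec_eq_iff sum.distrib algebra_simps)
lemma mm_add_l: "(A::real^'n::finite^'m::finite) ** ((B::real^'p::finite^'n) + C) = A ** B + A ** C"
  by (rule matrix_add_ldistrib)
lemma mm_diff_r: "((A::real^'n::finite^'m::finite) - B) ** (C::real^'p::finite^'n) = A ** C - B ** C"
  by (simp add: matrix_matrix_mult_def vec_eq_iff sum_subtractf algebra_simps)
lemma mm_diff_l: "(A::real^'n::finite^'m::finite) ** ((B::real^'p::finite^'n) - C) = A ** B - A ** C"
  by (simp add: matrix_matrix_mult_def vec_eq_iff sum_subtractf algebra_simps)
lemma mm_neg_r: "(- (A::real^'n::finite^'m::finite)) ** (C::real^'p::finite^'n) = - (A ** C)"
  by (simp add: matrix_matrix_mult_def vec_eq_iff sum_negf)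
lemma mm_neg_l: "(A::real^'n::finite^'m::finite) ** (- (C::real^'p::finite^'n)) = - (A ** C)"
  by (simp add: matrix_matrix_mult_def vec_eq_iff sum_negf)
lemma tr_add: "transpose ((A::real^'n::finite^'m::finite) + B) = transpose A + transpose B"
  by (simp add: transpose_def vec_eq_iff)
lemma tr_diff: "transpose ((A::real^'n::finite^'m::finite) - B) = transpose A - transpose B"
  by (simp add: transpose_def vec_eq_iff)

lemmas mm_simps = mm_add_r mm_add_l mm_diff_r mm_diff_l mm_neg_r mm_neg_l tr_add tr_diff
  matrix_transpose_mul transpose_transpose matrix_mul_assoc matrix_mul_lid matrix_mul_rid

lemma riem_mat:
  fixes Gi T :: "real^'n::finite^'n" and J Ei Ej :: "real^'n^'m::finite"
  shows "(-(Gi ** (transpose (transpose J ** Ei) + transpose J ** Ei) ** Gi) ** (transpose J ** Ej) + Gi ** (transpose Ei ** Ej + T))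
  - (-(Gi ** (transpose (transpose J ** Ej) + transpose J ** Ej) ** Gi) ** (transpose J ** Ei) + Gi ** (transpose Ej ** Ei + T))
  + (Gi ** (transpose J ** Ei)) ** (Gi ** (transpose J ** Ej)) - (Gi ** (transpose J ** Ej)) ** (Gi ** (transpose J ** Ei))
  = Gi ** (transpose Ei ** (mat 1 - J ** Gi ** transpose J) ** Ej - transpose Ej ** (mat 1 - J ** Gi ** transpose J) ** Ei)"
  by (simp add: mm_simps algebra_simps)

lemma mm_sum_r: "(\<Sum>i\<in>I. f i) ** (B::real^'p::finite^'n::finite) = (\<Sum>i\<in>I. (f i :: real^'n^'m::finite) ** B)"
  by (induction I rule: infinite_finite_induct) (simp_all add: mm_add_r)
lemma mm_sum_l: "(B::real^'n::finite^'m::finite) ** (\<Sum>i\<in>I. f i) = (\<Sum>i\<in>I. B ** (f i :: real^'p::finite^'n))"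
  by (induction I rule: infinite_finite_induct) (simp_all add: mm_add_l)
lemma vsum_nth: "(\<Sum>i\<in>I. f i) $ k = (\<Sum>i\<in>I. (f i :: real^'n::finite) $ k)"
  by (induction I rule: infinite_finite_induct) simp_all
lemma vsum_nth2: "(\<Sum>i\<in>I. f i) $ j $ k = (\<Sum>i\<in>I. (f i :: real^'n::finite^'m::finite) $ j $ k)"
  by (simp add: vsum_nth)

lemma sum_swap22:
  "(\<Sum>x\<in>A. \<Sum>y\<in>B. \<Sum>z\<in>C. \<Sum>w\<in>D. f x y z w) = (\<Sum>z\<in>C. \<Sum>w\<in>D. \<Sum>x\<in>A. \<Sum>y\<in>B. f x y z w)"
proof -
  have "(\<Sum>x\<in>A. \<Sum>y\<in>B. \<Sum>z\<in>C. \<Sum>w\<in>D. f x y z w) = (\<Sum>x\<in>A. \<Sum>z\<in>C. \<Sum>w\<in>D. \<Sum>y\<in>B. f x y z w)"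
  proof (rule sum.cong[OF refl])
    fix x
    have "(\<Sum>y\<in>B. \<Sum>z\<in>C. \<Sum>w\<in>D. f x y z w) = (\<Sum>z\<in>C. \<Sum>y\<in>B. \<Sum>w\<in>D. f x y z w)"
      by (rule sum.swap)
    also have "\<dots> = (\<Sum>z\<in>C. \<Sum>w\<in>D. \<Sum>y\<in>B. f x y z w)"
      by (rule sum.cong[OF refl], rule sum.swap)
    finally show "(\<Sum>y\<in>B. \<Sum>z\<in>C. \<Sum>w\<in>D. f x y z w) = (\<Sum>z\<in>C. \<Sum>w\<in>D. \<Sum>y\<in>B. f x y z w)" .
  qed
  also have "\<dots> = (\<Sum>z\<in>C. \<Sum>x\<in>A. \<Sum>w\<in>D. \<Sum>y\<in>B. f x y z w)"
    by (rule sum.swap)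
  also have "\<dots> = (\<Sum>z\<in>C. \<Sum>w\<in>D. \<Sum>x\<in>A. \<Sum>y\<in>B. f x y z w)"
    by (rule sum.cong[OF refl], rule sum.swap)
  finally show ?thesis .
qed

lemma sum_reorder:
  "(\<Sum>i\<in>A. \<Sum>a\<in>B. \<Sum>b\<in>C. \<Sum>c\<in>D. f i a b c) = (\<Sum>c\<in>D. \<Sum>b\<in>C. \<Sum>i\<in>A. \<Sum>a\<in>B. f i a b c)"
  by (subst sum_swap22, subst sum.swap, rule refl)

lemma woodbury:
  fixes J :: "real^'n::finite^'m::finite" and Gi :: "real^'n^'n"
  assumes "(mat 1 + transpose J ** J) ** Gi = mat 1"
  shows "(mat 1 + J ** transpose J) ** (mat 1 - J ** Gi ** transpose J) = mat 1"
proof -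
  have "J ** ((mat 1 + transpose J ** J) ** Gi) ** transpose J = J ** transpose J"
    using assms by simp
  then have h: "J ** Gi ** transpose J + J ** transpose J ** J ** Gi ** transpose J = J ** transpose J"
    by (simp add: mm_simps)
  have "(mat 1 + J ** transpose J) ** (mat 1 - J ** Gi ** transpose J)
     = mat 1 + J ** transpose J - (J ** Gi ** transpose J + J ** transpose J ** J ** Gi ** transpose J)"
    by (simp add: mm_simps algebra_simps)
  then show ?thesis using h by simp
qed

lemma comm_final:
  fixes A :: "'m::finite \<Rightarrow> real^'n::finite^'n" and P :: "real^'m^'m"
  shows "A g ** (\<Sum>\<mu>\<in>UNIV. \<Sum>\<nu>\<in>UNIV. P$\<mu>$\<nu> *\<^sub>R (trace (A \<mu>) *\<^sub>R A \<nu> - A \<mu> ** A \<nu>))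
       - (\<Sum>\<mu>\<in>UNIV. \<Sum>\<nu>\<in>UNIV. P$\<mu>$\<nu> *\<^sub>R (trace (A \<mu>) *\<^sub>R A \<nu> - A \<mu> ** A \<nu>)) ** A g
     = (\<Sum>\<mu>\<in>UNIV. \<Sum>\<nu>\<in>UNIV. P$\<mu>$\<nu> *\<^sub>R
         (trace (A \<mu>) *\<^sub>R (A g ** A \<nu> - A \<nu> ** A g) + (A \<mu> ** A g - A g ** A \<mu>) ** A \<nu>
          + A \<mu> ** (A \<nu> ** A g - A g ** A \<nu>)))"
proof -
  have "A g ** (\<Sum>\<mu>\<in>UNIV. \<Sum>\<nu>\<in>UNIV. P$\<mu>$\<nu> *\<^sub>R (trace (A \<mu>) *\<^sub>R A \<nu> - A \<mu> ** A \<nu>))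
       - (\<Sum>\<mu>\<in>UNIV. \<Sum>\<nu>\<in>UNIV. P$\<mu>$\<nu> *\<^sub>R (trace (A \<mu>) *\<^sub>R A \<nu> - A \<mu> ** A \<nu>)) ** A g
     = (\<Sum>\<mu>\<in>UNIV. \<Sum>\<nu>\<in>UNIV. A g ** (P$\<mu>$\<nu> *\<^sub>R (trace (A \<mu>) *\<^sub>R A \<nu> - A \<mu> ** A \<nu>))
           - (P$\<mu>$\<nu> *\<^sub>R (trace (A \<mu>) *\<^sub>R A \<nu> - A \<mu> ** A \<nu>)) ** A g)"
    by (simp add: mm_sum_l mm_sum_r sum_subtractf)
  also have "\<dots> = (\<Sum>\<mu>\<in>UNIV. \<Sum>\<nu>\<in>UNIV. P$\<mu>$\<nu> *\<^sub>R
         (trace (A \<mu>) *\<^sub>R (A g ** A \<nu> - A \<nu> ** A g) + (A \<mu> ** A g - A g ** A \<mu>) ** A \<nu>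
          + A \<mu> ** (A \<nu> ** A g - A g ** A \<nu>)))"
    by (intro sum.cong refl)
       (simp add: mm_simps matrix_scalar_ac scalar_matrix_assoc[symmetric] scaleR_right_diff_distrib
          scaleR_right_distrib algebra_simps)
  finally show ?thesis .
qed

lemma ricci_contract:
  fixes Gi :: "real^'n::finite^'n" and S :: "'m::finite \<Rightarrow> real^'n^'n" and P :: "real^'m^'m"
  assumes Gs: "\<And>a b. Gi$a$b = Gi$b$a" and Ss: "\<And>\<alpha> a b. S \<alpha>$a$b = S \<alpha>$b$a"
  shows "(\<Sum>i\<in>UNIV. (Gi ** (transpose (\<chi> \<alpha> k. S \<alpha> $ i $ k) ** P ** (\<chi> \<alpha> k. S \<alpha> $ j $ k)
              - transpose (\<chi> \<alpha> k. S \<alpha> $ j $ k) ** P ** (\<chi> \<alpha> k. S \<alpha> $ i $ k)))$i$k)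
   = (\<Sum>\<alpha>\<in>UNIV. \<Sum>\<beta>\<in>UNIV. P$\<alpha>$\<beta> *\<^sub>R (trace (Gi ** S \<alpha>) *\<^sub>R S \<beta> - S \<alpha> ** Gi ** S \<beta>))$j$k"
proof -
  have L1: "(\<Sum>i\<in>UNIV. (Gi ** (transpose (\<chi> \<alpha> k. S \<alpha> $ i $ k) ** P ** (\<chi> \<alpha> k. S \<alpha> $ j $ k)))$i$k)
     = (\<Sum>i\<in>UNIV. \<Sum>a\<in>UNIV. \<Sum>b\<in>UNIV. \<Sum>c\<in>UNIV. Gi$i$a * (S c$i$a * (P$c$b * S b$j$k)))"
    by (simp add: matrix_matrix_mult_def transpose_def sum_distrib_left sum_distrib_right mult.assoc)
  also have "\<dots> = (\<Sum>c\<in>UNIV. \<Sum>b\<in>UNIV. \<Sum>i\<in>UNIV. \<Sum>a\<in>UNIV. Gi$i$a * (S c$i$a * (P$c$b * S b$j$k)))"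
    by (rule sum_reorder)
  also have "\<dots> = (\<Sum>c\<in>UNIV. \<Sum>b\<in>UNIV. P$c$b * (trace (Gi ** S c) * S b$j$k))"
  proof (intro sum.cong refl)
    fix c b
    have "trace (Gi ** S c) = (\<Sum>i\<in>UNIV. \<Sum>a\<in>UNIV. Gi$i$a * S c$i$a)"
      by (simp add: trace_def matrix_matrix_mult_def Ss)
    then show "(\<Sum>i\<in>UNIV. \<Sum>a\<in>UNIV. Gi$i$a * (S c$i$a * (P$c$b * S b$j$k))) = P$c$b * (trace (Gi ** S c) * S b$j$k)"
      by (simp add: sum_distrib_left sum_distrib_right mult_ac)
  qed
  finally have L1': "(\<Sum>i\<in>UNIV. (Gi ** (transpose (\<chi> \<alpha> k. S \<alpha> $ i $ k) ** P ** (\<chi> \<alpha> k. S \<alpha> $ j $ k)))$i$k)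
     = (\<Sum>c\<in>UNIV. \<Sum>b\<in>UNIV. P$c$b * (trace (Gi ** S c) * S b$j$k))" .
  have L2: "(\<Sum>i\<in>UNIV. (Gi ** (transpose (\<chi> \<alpha> k. S \<alpha> $ j $ k) ** P ** (\<chi> \<alpha> k. S \<alpha> $ i $ k)))$i$k)
     = (\<Sum>i\<in>UNIV. \<Sum>a\<in>UNIV. \<Sum>b\<in>UNIV. \<Sum>c\<in>UNIV. Gi$i$a * (S c$j$a * (P$c$b * S b$i$k)))"
    by (simp add: matrix_matrix_mult_def transpose_def sum_distrib_left sum_distrib_right mult.assoc)
  also have "\<dots> = (\<Sum>c\<in>UNIV. \<Sum>b\<in>UNIV. \<Sum>i\<in>UNIV. \<Sum>a\<in>UNIV. Gi$i$a * (S c$j$a * (P$c$b * S b$i$k)))"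
    by (rule sum_reorder)
  also have "\<dots> = (\<Sum>c\<in>UNIV. \<Sum>b\<in>UNIV. P$c$b * (S c ** Gi ** S b)$j$k)"
  proof (intro sum.cong refl)
    fix c b
    have "(S c ** Gi ** S b)$j$k = (\<Sum>i\<in>UNIV. \<Sum>a\<in>UNIV. S c$j$a * Gi$a$i * S b$i$k)"
      by (simp add: matrix_matrix_mult_def sum_distrib_right)
    also have "\<dots> = (\<Sum>i\<in>UNIV. \<Sum>a\<in>UNIV. Gi$i$a * S c$j$a * S b$i$k)"
      by (subst Gs) (simp add: mult_ac)
    finally show "(\<Sum>i\<in>UNIV. \<Sum>a\<in>UNIV. Gi$i$a * (S c$j$a * (P$c$b * S b$i$k))) = P$c$b * (S c ** Gi ** S b)$j$k"
      by (simp add: sum_distrib_left mult_ac)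
  qed
  finally have L2': "(\<Sum>i\<in>UNIV. (Gi ** (transpose (\<chi> \<alpha> k. S \<alpha> $ j $ k) ** P ** (\<chi> \<alpha> k. S \<alpha> $ i $ k)))$i$k)
     = (\<Sum>c\<in>UNIV. \<Sum>b\<in>UNIV. P$c$b * (S c ** Gi ** S b)$j$k)" .
  have "(\<Sum>i\<in>UNIV. (Gi ** (transpose (\<chi> \<alpha> k. S \<alpha> $ i $ k) ** P ** (\<chi> \<alpha> k. S \<alpha> $ j $ k)
              - transpose (\<chi> \<alpha> k. S \<alpha> $ j $ k) ** P ** (\<chi> \<alpha> k. S \<alpha> $ i $ k)))$i$k)
     = (\<Sum>i\<in>UNIV. (Gi ** (transpose (\<chi> \<alpha> k. S \<alpha> $ i $ k) ** P ** (\<chi> \<alpha> k. S \<alpha> $ j $ k)))$i$k)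
      - (\<Sum>i\<in>UNIV. (Gi ** (transpose (\<chi> \<alpha> k. S \<alpha> $ j $ k) ** P ** (\<chi> \<alpha> k. S \<alpha> $ i $ k)))$i$k)"
    by (simp add: mm_diff_l sum_subtractf)
  also have "\<dots> = (\<Sum>c\<in>UNIV. \<Sum>b\<in>UNIV. P$c$b * (trace (Gi ** S c) * S b$j$k - (S c ** Gi ** S b)$j$k))"
    unfolding L1' L2' by (simp add: sum_subtractf algebra_simps)
  also have "\<dots> = (\<Sum>\<alpha>\<in>UNIV. \<Sum>\<beta>\<in>UNIV. P$\<alpha>$\<beta> *\<^sub>R (trace (Gi ** S \<alpha>) *\<^sub>R S \<beta> - S \<alpha> ** Gi ** S \<beta>))$j$k"
    by (simp add: vsum_nth2)
  finally show ?thesis .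
qed

context
  fixes f :: "real^'n::finite \<Rightarrow> real^'m::finite"
  assumes sm: "smooth_map f"
begin

lemma pds_diff: "pds is (\<lambda>x. f x $ \<alpha>) differentiable (at y)"
  using sm unfolding smooth_map_def smooth_fun_def by blast

lemma fd1_diff: "fd1 f \<alpha> i differentiable (at y)"
  using pds_diff[of "[i]"] by (simp add: fd1_def)

lemma fd2_diff: "fd2 f \<alpha> i j differentiable (at y)"
  using pds_diff[of "[i,j]"] by (simp add: fd2_def)

lemma fd3_diff: "pd i (fd2 f \<alpha> j k) differentiable (at y)"
  using pds_diff[of "[i,j,k]"] by (simp add: fd2_def)

lemma fd2_sym: "fd2 f \<alpha> i j y = fd2 f \<alpha> j i y"
proof -
  have "pd j (pd i (\<lambda>x. f x $ \<alpha>)) y = pd i (pd j (\<lambda>x. f x $ \<alpha>)) y"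
    using pds_diff[of "[]"] pds_diff[of "[i]"] pds_diff[of "[j]"]
      pds_diff[of "[j,i]"] pds_diff[of "[i,j]"]
    by (intro schwarz) (auto intro: differentiable_imp_continuous_within)
  then show ?thesis by (simp add: fd2_def)
qed

lemma fd3_sym: "pd i (fd2 f \<alpha> j k) y = pd j (fd2 f \<alpha> i k) y"
proof -
  have "pd j (pd i (pd k (\<lambda>x. f x $ \<alpha>))) y = pd i (pd j (pd k (\<lambda>x. f x $ \<alpha>))) y"
    using pds_diff[of "[k]"] pds_diff[of "[i,k]"] pds_diff[of "[j,k]"]
      pds_diff[of "[j,i,k]"] pds_diff[of "[i,j,k]"]
    by (intro schwarz) (auto intro: differentiable_imp_continuous_within)
  then show ?thesis by (simp add: fd2_def)
qed

definition Jm :: "real^'n \<Rightarrow> real^'n^'m" where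
  "Jm y = (\<chi> \<alpha> i. fd1 f \<alpha> i y)"

lemma gmet_eq: "gmet f y = mat 1 + transpose (Jm y) ** Jm y"
  by (simp add: gmet_def Jm_def mat_def matrix_matrix_mult_def transpose_def vec_eq_iff)

lemma Umat_eq: "Umat f y = mat 1 + Jm y ** transpose (Jm y)"
  by (simp add: Umat_def Jm_def mat_def matrix_matrix_mult_def transpose_def vec_eq_iff)

lemma gmet_inv: "invertible (gmet f y)"
  unfolding gmet_eq by (rule inv_I_plus)

lemma gmet_sym: "transpose (gmet f y) = gmet f y"
  by (simp add: gmet_def transpose_def vec_eq_iff mult.commute)

lemma ginv_sym: "ginv f y $ a $ b = ginv f y $ b $ a"
proof -
  have "transpose (ginv f y) = ginv f y"
    unfolding ginv_def by (rule minv_sym[OF gmet_inv gmet_sym])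
  then show ?thesis by (metis transpose_def vec_lambda_beta)
qed

lemma gmet_entry_diff: "(\<lambda>y. gmet f y $ a $ b) differentiable (at x)"
  unfolding gmet_def by (simp add: fd1_diff)

lemma ginv_diff: "(\<lambda>y. ginv f y $ a $ b) differentiable (at x)"
  unfolding ginv_def by (rule minv_differentiable[OF gmet_entry_diff gmet_inv])

definition Cf :: "'n \<Rightarrow> 'n \<Rightarrow> 'n \<Rightarrow> real^'n \<Rightarrow> real" where
  "Cf i j l y = (\<Sum>\<alpha>\<in>UNIV. fd2 f \<alpha> i j y * fd1 f \<alpha> l y)"

lemma Cf_diff: "Cf i j l differentiable (at y)"
proof -
  have "(\<lambda>y. \<Sum>\<alpha>\<in>UNIV. fd2 f \<alpha> i j y * fd1 f \<alpha> l y) differentiable (at y)"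
    by (simp add: fd1_diff fd2_diff)
  then show ?thesis by (simp add: Cf_def[abs_def])
qed

lemma pd_fd1: "pd i (fd1 f \<alpha> j) y = fd2 f \<alpha> i j y"
  by (simp add: fd1_def fd2_def)

lemma pd_gmet: "pd i (\<lambda>y. gmet f y $ j $ l) y = Cf i j l y + Cf i l j y"
proof -
  have "pd i (\<lambda>y. gmet f y $ j $ l) y
      = pd i (\<lambda>y. (if j = l then 1 else 0) + (\<Sum>\<alpha>\<in>UNIV. fd1 f \<alpha> j y * fd1 f \<alpha> l y)) y"
    by (simp add: gmet_def)
  also have "\<dots> = (\<Sum>\<alpha>\<in>UNIV. pd i (\<lambda>y. fd1 f \<alpha> j y * fd1 f \<alpha> l y) y)"
    by (simp add: pd_add pd_const pd_sum fd1_diff)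
  also have "\<dots> = (\<Sum>\<alpha>\<in>UNIV. fd2 f \<alpha> i j y * fd1 f \<alpha> l y + fd1 f \<alpha> j y * fd2 f \<alpha> i l y)"
    by (simp add: pd_mult fd1_diff pd_fd1)
  finally show ?thesis by (simp add: Cf_def sum.distrib mult.commute)
qed

lemma Cf_sym: "Cf i j l y = Cf j i l y"
  by (simp add: Cf_def fd2_sym[of _ i j])

lemma christ_eq: "christ f k i j y = (\<Sum>l\<in>UNIV. ginv f y $ k $ l * Cf i j l y)"
proof -
  have "\<And>l. pd i (\<lambda>y. gmet f y $ j $ l) y + pd j (\<lambda>y. gmet f y $ i $ l) y - pd l (\<lambda>y. gmet f y $ i $ j) y
        = 2 * Cf i j l y"
  proof -
    fix l
    have a: "Cf l i j y = Cf i l j y" "Cf l j i y = Cf j l i y" "Cf j i l y = Cf i j l y"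
      using Cf_sym by auto
    show "pd i (\<lambda>y. gmet f y $ j $ l) y + pd j (\<lambda>y. gmet f y $ i $ l) y - pd l (\<lambda>y. gmet f y $ i $ j) y
        = 2 * Cf i j l y"
      unfolding pd_gmet a by simp
  qed
  then show ?thesis by (simp add: christ_def)
qed

lemma christ_fun: "christ f k i j = (\<lambda>y. \<Sum>l\<in>UNIV. ginv f y $ k $ l * Cf i j l y)"
  by (rule ext) (rule christ_eq)

lemma pd_Cf: "pd i (Cf j k m) x = (\<Sum>\<alpha>\<in>UNIV. pd i (fd2 f \<alpha> j k) x * fd1 f \<alpha> m x + fd2 f \<alpha> j k x * fd2 f \<alpha> i m x)"
proof -
  have "pd i (Cf j k m) x = pd i (\<lambda>y. \<Sum>\<alpha>\<in>UNIV. fd2 f \<alpha> j k y * fd1 f \<alpha> m y) x"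
    by (simp add: Cf_def[abs_def])
  also have "\<dots> = (\<Sum>\<alpha>\<in>UNIV. pd i (\<lambda>y. fd2 f \<alpha> j k y * fd1 f \<alpha> m y) x)"
    by (simp add: pd_sum fd1_diff fd2_diff)
  finally show ?thesis by (simp add: pd_mult fd1_diff fd2_diff pd_fd1)
qed

lemma pd_christ: "pd i (christ f l j k) x
   = (\<Sum>m\<in>UNIV. pd i (\<lambda>y. ginv f y $ l $ m) x * Cf j k m x + ginv f x $ l $ m * pd i (Cf j k m) x)"
  unfolding christ_fun
  by (simp add: pd_sum pd_mult ginv_diff Cf_diff)

definition dG :: "'n \<Rightarrow> real^'n \<Rightarrow> real^'n^'n" where
  "dG i x = (\<chi> p q. pd i (\<lambda>y. gmet f y $ p $ q) x)"
definition dGi :: "'n \<Rightarrow> real^'n \<Rightarrow> real^'n^'n" where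
  "dGi i x = (\<chi> p q. pd i (\<lambda>y. ginv f y $ p $ q) x)"

lemma gmet_ginv: "gmet f y ** ginv f y = mat 1" "ginv f y ** gmet f y = mat 1"
  unfolding ginv_def using minv_props[OF gmet_inv] by auto

lemma dGi_eq: "dGi i x = - (ginv f x ** dG i x ** ginv f x)"
proof -
  have "\<And>l m. (\<lambda>y. (gmet f y ** ginv f y) $ l $ m) = (\<lambda>y. (mat 1 :: real^'n^'n) $ l $ m)"
    using gmet_ginv by simp
  then have "\<And>l m. pd i (\<lambda>y. \<Sum>p\<in>UNIV. gmet f y $ l $ p * ginv f y $ p $ m) x = 0"
    by (simp add: matrix_matrix_mult_def pd_const)
  then have "\<And>l m. (\<Sum>p\<in>UNIV. pd i (\<lambda>y. gmet f y $ l $ p) x * ginv f x $ p $ m + gmet f x $ l $ p * pd i (\<lambda>y. ginv f y $ p $ m) x) = 0"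
    by (simp add: pd_sum pd_mult gmet_entry_diff ginv_diff)
  then have "dG i x ** ginv f x + gmet f x ** dGi i x = 0"
    by (simp add: dG_def dGi_def matrix_matrix_mult_def vec_eq_iff sum.distrib)
  then have "ginv f x ** (dG i x ** ginv f x + gmet f x ** dGi i x) = 0" by simp
  then have "ginv f x ** dG i x ** ginv f x + dGi i x = 0"
    by (simp add: mm_simps gmet_ginv)
  then show ?thesis by (simp add: eq_neg_iff_add_eq_0 add.commute)
qed

end

context
  fixes f :: "real^'n::finite \<Rightarrow> real^'m::finite"
  assumes sm: "smooth_map f"
begin

definition Sm :: "'m \<Rightarrow> real^'n \<Rightarrow> real^'n^'n" where
  "Sm \<alpha> x = (\<chi> a b. fd2 f \<alpha> a b x)"
definition Sig :: "'n \<Rightarrow> real^'n \<Rightarrow> real^'n^'m" where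
  "Sig i x = (\<chi> \<alpha> k. Sm \<alpha> x $ i $ k)"
definition Cm :: "'n \<Rightarrow> real^'n \<Rightarrow> real^'n^'n" where
  "Cm i x = (\<chi> m k. Cf f i k m x)"
definition Tm :: "'n \<Rightarrow> 'n \<Rightarrow> real^'n \<Rightarrow> real^'n^'n" where
  "Tm i j x = (\<chi> m k. \<Sum>\<alpha>\<in>UNIV. pd i (fd2 f \<alpha> j k) x * fd1 f \<alpha> m x)"

lemma Jm_nth: "Jm f y $ a $ i = fd1 f a i y"
  using sm by (simp add: Jm_def[OF sm])

lemma Cm_eq: "Cm i x = transpose (Jm f x) ** Sig i x"
  using sm by (simp add: Jm_nth Cm_def Cf_def[OF sm] Jm_def[OF sm] Sig_def Sm_def matrix_matrix_mult_def transpose_def vec_eq_iff mult.commute)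

lemma dG_eq: "dG f i x = transpose (Cm i x) + Cm i x"
  using sm by (simp add: dG_def[OF sm] Cm_def pd_gmet[OF sm] transpose_def vec_eq_iff add.commute)

lemma Tm_sym: "Tm i j x = Tm j i x"
  using sm by (simp add: Tm_def fd3_sym[OF sm, of i _ j])

lemma dCm_eq: "(\<chi> m k. pd i (Cf f j k m) x) = transpose (Sig i x) ** Sig j x + Tm i j x"
  using sm by (simp add: pd_Cf[OF sm] Tm_def Sig_def Sm_def matrix_matrix_mult_def transpose_def vec_eq_iff
      sum.distrib mult.commute)

lemma christ_mat: "christ f l i k x = (ginv f x ** Cm i x) $ l $ k"
  using sm by (simp add: christ_eq[OF sm] Cm_def matrix_matrix_mult_def)

lemma pd_christ_mat: "pd i (christ f l j k) x
   = (dGi f i x ** Cm j x + ginv f x ** (\<chi> m k. pd i (Cf f j k m) x)) $ l $ k"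
  using sm by (simp add: pd_christ[OF sm] dGi_def[OF sm] Cm_def matrix_matrix_mult_def sum.distrib)

lemma riem_eq: "riem f l i j k x =
   (ginv f x ** (transpose (Sig i x) ** (mat 1 - Jm f x ** ginv f x ** transpose (Jm f x)) ** Sig j x
      - transpose (Sig j x) ** (mat 1 - Jm f x ** ginv f x ** transpose (Jm f x)) ** Sig i x)) $ l $ k"
proof -
  have "riem f l i j k x =
     ((dGi f i x ** Cm j x + ginv f x ** (\<chi> m k. pd i (Cf f j k m) x)) 
      - (dGi f j x ** Cm i x + ginv f x ** (\<chi> m k. pd j (Cf f i k m) x))
      + (ginv f x ** Cm i x) ** (ginv f x ** Cm j x) - (ginv f x ** Cm j x) ** (ginv f x ** Cm i x)) $ l $ k"
    unfolding riem_def pd_christ_mat christ_mat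
    by (simp add: matrix_matrix_mult_def sum_subtractf mult.commute)
  also have "((dGi f i x ** Cm j x + ginv f x ** (\<chi> m k. pd i (Cf f j k m) x)) 
      - (dGi f j x ** Cm i x + ginv f x ** (\<chi> m k. pd j (Cf f i k m) x))
      + (ginv f x ** Cm i x) ** (ginv f x ** Cm j x) - (ginv f x ** Cm j x) ** (ginv f x ** Cm i x))
     = ginv f x ** (transpose (Sig i x) ** (mat 1 - Jm f x ** ginv f x ** transpose (Jm f x)) ** Sig j x
      - transpose (Sig j x) ** (mat 1 - Jm f x ** ginv f x ** transpose (Jm f x)) ** Sig i x)"
    unfolding dGi_eq[OF sm] dG_eq dCm_eq Tm_sym[of j i] Cm_eq
    by (rule riem_mat)
  finally show ?thesis .
qed

lemma ricci_eq: "ricci f x = (\<Sum>\<alpha>\<in>UNIV. \<Sum>\<beta>\<in>UNIV.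
    (mat 1 - Jm f x ** ginv f x ** transpose (Jm f x))$\<alpha>$\<beta> *\<^sub>R
      (trace (ginv f x ** Sm \<alpha> x) *\<^sub>R Sm \<beta> x - Sm \<alpha> x ** ginv f x ** Sm \<beta> x))"
proof -
  have "\<And>j k. ricci f x $ j $ k = (\<Sum>\<alpha>\<in>UNIV. \<Sum>\<beta>\<in>UNIV.
    (mat 1 - Jm f x ** ginv f x ** transpose (Jm f x))$\<alpha>$\<beta> *\<^sub>R
      (trace (ginv f x ** Sm \<alpha> x) *\<^sub>R Sm \<beta> x - Sm \<alpha> x ** ginv f x ** Sm \<beta> x)) $ j $ k"
  proof -
    fix j k
    have "ricci f x $ j $ k = (\<Sum>i\<in>UNIV. riem f i i j k x)" by (simp add: ricci_def)
    also have "\<dots> = (\<Sum>i\<in>UNIV. (ginv f x ** (transpose (\<chi> \<alpha> k. Sm \<alpha> x $ i $ k) ** (mat 1 - Jm f x ** ginv f x ** transpose (Jm f x)) ** (\<chi> \<alpha> k. Sm \<alpha> x $ j $ k)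
      - transpose (\<chi> \<alpha> k. Sm \<alpha> x $ j $ k) ** (mat 1 - Jm f x ** ginv f x ** transpose (Jm f x)) ** (\<chi> \<alpha> k. Sm \<alpha> x $ i $ k))) $ i $ k)"
      by (simp add: riem_eq Sig_def)
    also have "\<dots> = (\<Sum>\<alpha>\<in>UNIV. \<Sum>\<beta>\<in>UNIV.
    (mat 1 - Jm f x ** ginv f x ** transpose (Jm f x))$\<alpha>$\<beta> *\<^sub>R
      (trace (ginv f x ** Sm \<alpha> x) *\<^sub>R Sm \<beta> x - Sm \<alpha> x ** ginv f x ** Sm \<beta> x)) $ j $ k"
      by (rule ricci_contract) (simp_all add: ginv_sym[OF sm] Sm_def fd2_sym[OF sm])
    finally show "ricci f x $ j $ k = (\<Sum>\<alpha>\<in>UNIV. \<Sum>\<beta>\<in>UNIV.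
    (mat 1 - Jm f x ** ginv f x ** transpose (Jm f x))$\<alpha>$\<beta> *\<^sub>R
      (trace (ginv f x ** Sm \<alpha> x) *\<^sub>R Sm \<beta> x - Sm \<alpha> x ** ginv f x ** Sm \<beta> x)) $ j $ k" .
  qed
  then show ?thesis by (simp add: vec_eq_iff)
qed

lemma Ashape_eq: "Ashape f \<alpha> x = ginv f x ** Sm \<alpha> x"
  by (simp add: Ashape_def Sm_def matrix_matrix_mult_def vec_eq_iff ginv_sym[OF sm, of x] fd2_sym[OF sm, of \<alpha>] mult.commute)

lemma P_eq: "Uinv f x = mat 1 - Jm f x ** ginv f x ** transpose (Jm f x)"
  unfolding Uinv_def Umat_eq[OF sm]
  by (rule minv_unique, rule woodbury) (metis gmet_eq[OF sm] gmet_ginv(1)[OF sm])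

lemma mm_scale_l: "(A::real^'a::finite^'b::finite) ** (k *\<^sub>R (B::real^'c::finite^'a)) = k *\<^sub>R (A ** B)"
  by (simp add: matrix_scalar_ac scalar_matrix_assoc)
lemma mm_scale_r: "(k *\<^sub>R (A::real^'a::finite^'b::finite)) ** (B::real^'c::finite^'a) = k *\<^sub>R (A ** B)"
  by (simp add: scalar_matrix_assoc)

lemma Rc_eq: "Rc f x = (\<Sum>\<mu>\<in>UNIV. \<Sum>\<nu>\<in>UNIV. Uinv f x $\<mu>$\<nu> *\<^sub>R
      (trace (Ashape f \<mu> x) *\<^sub>R Ashape f \<nu> x - Ashape f \<mu> x ** Ashape f \<nu> x))"
  unfolding Rc_def ricci_eq Ashape_eq P_eq
  by (simp add: mm_sum_l mm_scale_l mm_scale_r mm_diff_l matrix_mul_assoc scaleR_right_diff_distrib mult.commute)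

end

theorem lemma2p2:
  fixes f :: "real^'n \<Rightarrow> real^'m"
  assumes "smooth_map f"
  shows "\<forall>x \<alpha>. Ashape f \<alpha> x ** Rc f x - Rc f x ** Ashape f \<alpha> x =
    (\<Sum>\<mu>\<in>UNIV. \<Sum>\<nu>\<in>UNIV. Uinv f x $ \<mu> $ \<nu> *\<^sub>R
       (trace (Ashape f \<mu> x) *\<^sub>R Rperp f \<nu> \<alpha> x + Rperp f \<alpha> \<mu> x ** Ashape f \<nu> x
        + Ashape f \<mu> x ** Rperp f \<alpha> \<nu> x))"
proof (intro allI)
  fix x \<alpha>
  show "Ashape f \<alpha> x ** Rc f x - Rc f x ** Ashape f \<alpha> x =
    (\<Sum>\<mu>\<in>UNIV. \<Sum>\<nu>\<in>UNIV. Uinv f x $ \<mu> $ \<nu> *\<^sub>R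
       (trace (Ashape f \<mu> x) *\<^sub>R Rperp f \<nu> \<alpha> x + Rperp f \<alpha> \<mu> x ** Ashape f \<nu> x
        + Ashape f \<mu> x ** Rperp f \<alpha> \<nu> x))"
    unfolding Rc_eq[OF assms] Rperp_def
    by (rule comm_final)
qed

end
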